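(* Let $\ell$ and $n$ be positive integers. For each positive integer $\ell'$, let $O_{n,\ell'}(\mathbb{Q})$ denote the set of $n\times n$ rational orthogonal matrices of level $\ell'$. Then $$\sum_{\ell'\mid \ell}\big|O_{n,\ell'}(\mathbb{Q})\big|\le (2n)^{\ell^2 n}.$$
   Context: A rational orthogonal matrix is an $n\times n$ matrix $Q$ with rational entries and $Q^\top Q=I$. The level of a rational matrix $M$ is the smallest positive integer $\ell$ such that $\ell M$ has integer entries. The sum ranges over all positive divisors $\ell'$ of $\ell$. *)

theory Defs
  imports "HOL-Analysis.Analysis"
begin

text \<open>Rational n x n matrices are modelled as rat^'n^'n, with n = CARD('n).\<close>

definition rat_orthogonal :: "rat^'n^'n \<Rightarrow> bool" where
  "rat_orthogonal Q \<longleftrightarrow> transpose Q ** Q = mat 1"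

definition is_integral_matrix :: "rat^'n^'n \<Rightarrow> bool" where
  "is_integral_matrix M \<longleftrightarrow> (\<forall>i j. M $ i $ j \<in> \<int>)"

definition level :: "rat^'n^'n \<Rightarrow> nat" where
  "level M = (LEAST l::nat. 0 < l \<and> is_integral_matrix (\<chi> i j. of_nat l * M $ i $ j))"

definition orth_level_set :: "nat \<Rightarrow> (rat^'n^'n) set" where
  "orth_level_set l' = {Q. rat_orthogonal Q \<and> level Q = l'}"

end

theory Submission
  imports Defs
begin
definition dn :: "rat \<Rightarrow> nat" where "dn x = nat (snd (quotient_of x))"

lemma dn_pos: "0 < dn x"
  unfolding dn_def using quotient_of_denom_pos' by simp

lemma dn_int: "of_nat (dn x) * x \<in> \<int>"
proof -
  obtain a b where q: "quotient_of x = (a, b)" by (cases "quotient_of x") auto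
  have b: "b > 0" using quotient_of_denom_pos[OF q] .
  have "x = of_int a / of_int b" using quotient_of_div[OF q] .
  hence "of_int b * x = of_int a" using b by simp
  moreover have "of_nat (dn x) = (of_int b :: rat)" using b q unfolding dn_def by simp
  ultimately show ?thesis by simp
qed

lemma dvd_int: "(k::nat) dvd D \<Longrightarrow> of_nat k * x \<in> \<int> \<Longrightarrow> of_nat D * (x::rat) \<in> \<int>"
proof -
  assume "k dvd D" "of_nat k * x \<in> \<int>"
  then obtain c where "D = k * c" by auto
  hence "of_nat D * x = of_nat c * (of_nat k * x)" by (simp add: algebra_simps)
  thus ?thesis using \<open>of_nat k * x \<in> \<int>\<close> by (metis Ints_mult Ints_of_nat)
qed

lemma level_ex: "\<exists>d::nat. 0 < d \<and> is_integral_matrix (\<chi> i j. of_nat d * (Q::rat^'n^'n) $ i $ j)"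
proof -
  define D where "D = (\<Prod>p\<in>UNIV. dn (Q $ fst p $ snd p))"
  have "0 < D" unfolding D_def using dn_pos by (simp add: prod_pos)
  moreover have "of_nat D * Q $ i $ j \<in> \<int>" for i j
  proof -
    have "dn (Q $ fst (i,j) $ snd (i,j)) dvd D" unfolding D_def by (rule dvd_prodI) auto
    thus ?thesis using dn_int dvd_int by fastforce
  qed
  ultimately show ?thesis unfolding is_integral_matrix_def by auto
qed

lemma level_props: "0 < level Q \<and> is_integral_matrix (\<chi> i j. of_nat (level Q) * (Q::rat^'n^'n) $ i $ j)"
  unfolding level_def by (rule LeastI_ex[OF level_ex])

lemma in_T:
  assumes "Q \<in> orth_level_set d" "d dvd l"
  shows "rat_orthogonal Q \<and> (\<forall>i j. of_nat l * Q $ i $ j \<in> \<int>)"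
proof -
  have "level Q = d" "rat_orthogonal Q" using assms(1) unfolding orth_level_set_def by auto
  with level_props[of Q] have "\<forall>i j. of_nat d * Q $ i $ j \<in> \<int>" unfolding is_integral_matrix_def by auto
  thus ?thesis using dvd_int[OF assms(2)] \<open>rat_orthogonal Q\<close> by blast
qed

definition gdec :: "nat \<Rightarrow> (nat \<Rightarrow> 'n \<times> bool) \<Rightarrow> 'n \<Rightarrow> int" where
  "gdec m f i = (if \<exists>k<m. f k = (i, True) then -1 else 1) *
      int (THE t::nat. t^2 = card {k\<in>{..<m}. fst (f k) = i})"

lemma the_sqrt: "(THE t::nat. t^2 = a^2) = a"
  by (rule the_equality) (auto simp: power2_eq_iff_nonneg)

lemma image_Int_Collect_helper: "h ` {k\<in>X. h k \<in> B} = h ` X \<inter> B"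
  by auto

lemma surj_gdec:
  fixes v :: "'n::finite \<Rightarrow> int"
  assumes "(\<Sum>i\<in>UNIV. (v i)^2) = int m"
  shows "v \<in> gdec m ` (\<Pi>\<^sub>E k\<in>{..<m}. UNIV)"
proof -
  define A where "A = (SIGMA i:UNIV. {..<nat ((v i)^2)})"
  have finA: "finite A" unfolding A_def by auto
  have "int (card A) = (\<Sum>i\<in>UNIV. int (nat ((v i)^2)))" unfolding A_def by (simp add: card_SigmaI)
  also have "\<dots> = (\<Sum>i\<in>UNIV. (v i)^2)" by simp
  also have "\<dots> = int m" using assms by simp
  finally have cA: "card A = m" by simp
  obtain h where h: "bij_betw h {0..<m} A" using ex_bij_betw_nat_finite[OF finA] cA by blast
  define f where "f = (\<lambda>k. if k < m then (fst (h k), v (fst (h k)) < 0) else undefined)"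
  have fP: "f \<in> (\<Pi>\<^sub>E k\<in>{..<m}. UNIV)" unfolding f_def PiE_def extensional_def by auto
  have card_fib: "card {k\<in>{..<m}. fst (f k) = i} = nat ((v i)^2)" for i
  proof -
    have e: "{k\<in>{..<m}. fst (f k) = i} = {k\<in>{0..<m}. h k \<in> {i} \<times> {..<nat ((v i)^2)}}"
      using h unfolding f_def A_def bij_betw_def by (auto simp: mem_Times_iff)
    have "h ` {k\<in>{0..<m}. h k \<in> {i} \<times> {..<nat ((v i)^2)}} = h ` {0..<m} \<inter> ({i} \<times> {..<nat ((v i)^2)})"
      by (rule image_Int_Collect_helper)
    also have "\<dots> = {i} \<times> {..<nat ((v i)^2)}"
      using h unfolding A_def bij_betw_def by auto
    finally have "h ` {k\<in>{0..<m}. h k \<in> {i} \<times> {..<nat ((v i)^2)}} = {i} \<times> {..<nat ((v i)^2)}" .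
    moreover have inj: "inj_on h {k\<in>{0..<m}. h k \<in> {i} \<times> {..<nat ((v i)^2)}}"
      using h unfolding bij_betw_def by (auto intro: inj_on_subset)
    ultimately have "card {k\<in>{0..<m}. h k \<in> {i} \<times> {..<nat ((v i)^2)}} = card ({i} \<times> {..<nat ((v i)^2)})"
      using card_image[OF inj] by argo
    also have "\<dots> = nat ((v i)^2)" by (simp add: card_cartesian_product_singleton)
    finally have "card {k\<in>{0..<m}. h k \<in> {i} \<times> {..<nat ((v i)^2)}} = nat ((v i)^2)" .
    thus ?thesis using e by simp
  qed
  have "gdec m f i = v i" for i
  proof -
    have t: "(THE t::nat. t^2 = card {k\<in>{..<m}. fst (f k) = i}) = nat \<bar>v i\<bar>"
    proof -
      have "nat ((v i)^2) = nat (\<bar>v i\<bar>^2)" by simp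
      also have "\<dots> = (nat \<bar>v i\<bar>)^2" by (rule nat_power_eq) simp
      finally show ?thesis unfolding card_fib by (simp only: the_sqrt)
    qed
    have s: "(\<exists>k<m. f k = (i, True)) \<longleftrightarrow> v i < 0"
    proof
      assume "\<exists>k<m. f k = (i, True)"
      then obtain k where "k < m" "f k = (i, True)" by blast
      thus "v i < 0" unfolding f_def by auto
    next
      assume vi: "v i < 0"
      have "(i, 0) \<in> A" unfolding A_def using vi by simp
      then obtain k where "k \<in> {0..<m}" "h k = (i, 0)" using h unfolding bij_betw_def by force
      thus "\<exists>k<m. f k = (i, True)" unfolding f_def using vi by (intro exI[of _ k]) simp
    qed
    show ?thesis unfolding gdec_def t using s by auto
  qed
  hence "gdec m f = v" by auto
  thus ?thesis using fP by blast
qed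

lemma card_vecs:
  "finite {v::'n::finite \<Rightarrow> int. (\<Sum>i\<in>UNIV. (v i)^2) = int m} \<and>
   card {v::'n::finite \<Rightarrow> int. (\<Sum>i\<in>UNIV. (v i)^2) = int m} \<le> (2 * CARD('n))^m"
proof -
  let ?S = "{v::'n::finite \<Rightarrow> int. (\<Sum>i\<in>UNIV. (v i)^2) = int m}"
  let ?P = "(\<Pi>\<^sub>E k\<in>{..<m}. (UNIV :: ('n \<times> bool) set))"
  have sub: "?S \<subseteq> gdec m ` ?P" using surj_gdec by blast
  have finP: "finite ?P" by (simp add: finite_PiE)
  have cP: "card ?P = (2 * CARD('n))^m" by (simp add: card_PiE card_cartesian_product)
  have "card ?S \<le> card (gdec m ` ?P)" using sub finP by (intro card_mono) auto
  also have "\<dots> \<le> card ?P" using finP by (rule card_image_le)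
  finally show ?thesis using cP finite_subset[OF sub] finP by auto
qed

lemma floor_id: "x \<in> \<int> \<Longrightarrow> of_int \<lfloor>x\<rfloor> = (x::rat)"
  by (metis Ints_cases floor_of_int)

theorem mainTheorem3:
  fixes l :: nat
  assumes "0 < l"
  shows "(\<Sum>l'\<in>{d. d dvd l}. card (orth_level_set l' :: (rat^'n^'n) set))
           \<le> (2 * CARD('n)) ^ (l^2 * CARD('n))"
proof -
  define T where "T = {Q::rat^'n^'n. rat_orthogonal Q \<and> (\<forall>i j. of_nat l * Q $ i $ j \<in> \<int>)}"
  define S where "S = {v::'n \<Rightarrow> int. (\<Sum>i\<in>UNIV. (v i)^2) = int (l^2)}"
  define F where "F = (\<lambda>(Q::rat^'n^'n) j i. \<lfloor>of_nat l * Q $ i $ j\<rfloor>)"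
  have SS: "finite S" "card S \<le> (2 * CARD('n))^(l^2)" using card_vecs[of "l^2"] unfolding S_def by auto
  have img: "F ` T \<subseteq> (\<Pi>\<^sub>E j\<in>UNIV. S)"
  proof
    fix G assume "G \<in> F ` T"
    then obtain Q where Q: "Q \<in> T" "G = F Q" by blast
    have "G j \<in> S" for j
    proof -
      have "(of_int (\<Sum>i\<in>UNIV. (G j i)^2) :: rat) = (\<Sum>i\<in>UNIV. (of_nat l * Q $ i $ j)^2)"
        using Q unfolding F_def T_def by (simp add: floor_id)
      also have "\<dots> = of_nat l ^ 2 * (\<Sum>i\<in>UNIV. Q $ i $ j * Q $ i $ j)"
        by (simp add: sum_distrib_left power2_eq_square algebra_simps)
      also have "(\<Sum>i\<in>UNIV. Q $ i $ j * Q $ i $ j) = (transpose Q ** Q) $ j $ j"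
        by (simp add: matrix_matrix_mult_def transpose_def)
      also have "\<dots> = 1" using Q unfolding T_def rat_orthogonal_def by (simp add: mat_def)
      finally have "(of_int (\<Sum>i\<in>UNIV. (G j i)^2) :: rat) = of_int (int (l^2))" by simp
      hence "(\<Sum>i\<in>UNIV. (G j i)^2) = int (l^2)" by (simp only: of_int_eq_iff)
      thus ?thesis unfolding S_def by simp
    qed
    thus "G \<in> (\<Pi>\<^sub>E j\<in>UNIV. S)" by auto
  qed
  have inj: "inj_on F T"
  proof
    fix Q R assume QR: "Q \<in> T" "R \<in> T" "F Q = F R"
    have "Q $ i $ j = R $ i $ j" for i j
    proof -
      have "\<lfloor>of_nat l * Q $ i $ j\<rfloor> = \<lfloor>of_nat l * R $ i $ j\<rfloor>"
        using QR(3) unfolding F_def by meson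
      hence "of_nat l * Q $ i $ j = of_nat l * R $ i $ j"
        using QR(1,2) unfolding T_def by (metis (mono_tags, lifting) floor_id mem_Collect_eq)
      thus ?thesis using assms by simp
    qed
    thus "Q = R" by (simp add: vec_eq_iff)
  qed
  have finPi: "finite (\<Pi>\<^sub>E j\<in>(UNIV::'n set). S)" using SS by (simp add: finite_PiE)
  have finT: "finite T" using inj_on_finite[OF inj img finPi] .
  have "card T = card (F ` T)" using card_image[OF inj] by simp
  also have "\<dots> \<le> card (\<Pi>\<^sub>E j\<in>(UNIV::'n set). S)" using card_mono[OF finPi img] .
  also have "\<dots> = card S ^ CARD('n)" by (simp add: card_PiE)
  also have "\<dots> \<le> ((2 * CARD('n))^(l^2)) ^ CARD('n)" using SS(2) by (rule power_mono) simp
  also have "\<dots> = (2 * CARD('n)) ^ (l^2 * CARD('n))" by (simp add: power_mult)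
  finally have cT: "card T \<le> (2 * CARD('n)) ^ (l^2 * CARD('n))" .
  have finD: "finite {d. d dvd l}" using assms by simp
  have sub: "(\<Union>d\<in>{d. d dvd l}. (orth_level_set d :: (rat^'n^'n) set)) \<subseteq> T"
    using in_T unfolding T_def by blast
  have finO: "\<forall>d\<in>{d. d dvd l}. finite (orth_level_set d :: (rat^'n^'n) set)"
    using sub finT by (meson UN_subset_iff finite_subset)
  have disj: "\<forall>d\<in>{d. d dvd l}. \<forall>d'\<in>{d. d dvd l}. d \<noteq> d' \<longrightarrow>
      (orth_level_set d :: (rat^'n^'n) set) \<inter> orth_level_set d' = {}"
    unfolding orth_level_set_def by auto
  have "(\<Sum>l'\<in>{d. d dvd l}. card (orth_level_set l' :: (rat^'n^'n) set))
        = card (\<Union>d\<in>{d. d dvd l}. (orth_level_set d :: (rat^'n^'n) set))"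
    using card_UN_disjoint[OF finD finO disj] by simp
  also have "\<dots> \<le> card T" using card_mono[OF finT sub] .
  finally show ?thesis using cT by linarith
qed

end
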